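(* Let $n\ge1$ and let $\omega\in\mathbb{R}^n$ be non-resonant (i.e. $\langle k,\omega\rangle\notin\mathbb{Z}$ for all $k\in\mathbb{Z}^n\setminus\{0\}$). Suppose there exist $\tau\in\left[0,\frac{1}{n-1}\right)$ (with $\left[0,\frac{1}{n-1}\right)=[0,\infty)$ if $n=1$) and $C>0$ such that $T_{i+1}(\omega)\le C\,T_i(\omega)^{1+\tau}$ for all $i\ge0$. Then there is a constant $D>0$ such that for every $k\in\mathbb{Z}^n\setminus\{0\}$, $$\|\langle k,\omega\rangle\|_{\mathbb{Z}}\ge D\,|k|^{-(1+\mu)n},\qquad\text{where }\ \mu=\frac{n\tau}{n-(n-1)(1+\tau)}.$$
   Context: For $k\in\mathbb{Z}^n$, $|k|=\max_i|k_i|$; for $x\in\mathbb{R}$, $\|x\|_{\mathbb{Z}}=\min_{m\in\mathbb{Z}}|x-m|$; for $v\in\mathbb{R}^n$, $\|v\|_{\mathbb{Z}}=\min_{m\in\mathbb{Z}^n}|v-m|$. The periods of $\omega$ are $T_0(\omega)=1$ and $T_{i+1}(\omega)=\min\{T\in\mathbb{N},\,T\ge1:\|T\omega\|_{\mathbb{Z}}<\|T_i(\omega)\omega\|_{\mathbb{Z}}\}$ (all defined since $\omega$ is non-resonant). *)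

theory Defs
  imports "HOL-Analysis.Analysis"
begin

definition int_supnorm :: "int ^ 'n \<Rightarrow> int" where
  "int_supnorm k = Max (range (\<lambda>i. \<bar>k $ i\<bar>))"

definition ipair :: "int ^ 'n \<Rightarrow> real ^ 'n \<Rightarrow> real" where
  "ipair k w = (\<Sum>i\<in>UNIV. of_int (k $ i) * w $ i)"

definition zdist :: "real \<Rightarrow> real" where
  "zdist x = (INF m::int. \<bar>x - of_int m\<bar>)"

definition vzdist :: "real ^ 'n \<Rightarrow> real" where
  "vzdist v = (INF m::int ^ 'n. Max (range (\<lambda>i. \<bar>v $ i - of_int (m $ i)\<bar>)))"

definition non_resonant :: "real ^ 'n \<Rightarrow> bool" where
  "non_resonant w \<longleftrightarrow> (\<forall>k::int ^ 'n. k \<noteq> 0 \<longrightarrow> ipair k w \<notin> \<int>)"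

primrec periods :: "real ^ 'n \<Rightarrow> nat \<Rightarrow> nat" where
  "periods w 0 = 1"
| "periods w (Suc i) =
     (LEAST T::nat. T \<ge> 1 \<and> vzdist (real T *\<^sub>R w) < vzdist (real (periods w i) *\<^sub>R w))"

end

theory Submission
  imports Defs
begin

lemma round_best: "\<bar>(x::real) - of_int (round x)\<bar> \<le> \<bar>x - of_int (m::int)\<bar>"
proof -
  have h: "\<bar>x - of_int (round x)\<bar> \<le> 1/2" using of_int_round_abs_le[of x] by (simp add: abs_minus_commute)
  show ?thesis
  proof (cases "m = round x")
    case False
    then have "\<bar>of_int (round x) - of_int m\<bar> \<ge> (1::real)"
      by (metis of_int_1_le_iff of_int_abs of_int_diff zabs_less_one_iff linorder_not_le right_minus_eq)
    then show ?thesis using h by linarith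
  qed simp
qed

lemma zdist_round: "zdist x = \<bar>x - of_int (round x)\<bar>"
  unfolding zdist_def
proof (rule antisym)
  show "(INF m::int. \<bar>x - of_int m\<bar>) \<le> \<bar>x - of_int (round x)\<bar>"
    by (rule cINF_lower) (auto intro: bdd_belowI[where m=0])
  show "\<bar>x - of_int (round x)\<bar> \<le> (INF m::int. \<bar>x - of_int m\<bar>)"
    by (rule cINF_greatest) (auto simp: round_best)
qed

lemma Max_ge_abs: "\<bar>f i\<bar> \<le> Max (range (\<lambda>i::'n::finite. \<bar>f i\<bar>))"
  by (rule Max_ge) auto

lemma vz_le: "vzdist v \<le> Max (range (\<lambda>i. \<bar>v $ i - of_int (m $ i)\<bar>))"
  unfolding vzdist_def
proof (rule cINF_lower)
  show "bdd_below (range (\<lambda>m::int^'a. Max (range (\<lambda>i. \<bar>v $ i - of_int (m $ i)\<bar>))))"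
  proof (rule bdd_belowI[where m=0], clarify)
    fix m :: "int^'a"
    obtain i :: 'a where True by blast
    show "0 \<le> Max (range (\<lambda>i. \<bar>v $ i - of_int (m $ i)\<bar>))"
      using Max_ge_abs[of "\<lambda>i. v $ i - of_int (m $ i)" i] by linarith
  qed
qed simp

lemma vz_ge: "(\<And>m::int^'n. c \<le> Max (range (\<lambda>i. \<bar>v $ i - of_int (m $ i)\<bar>))) \<Longrightarrow> c \<le> vzdist v"
  unfolding vzdist_def by (rule cINF_greatest) auto

lemma vz_half: "vzdist v \<le> 1/2"
proof -
  have "vzdist v \<le> Max (range (\<lambda>i. \<bar>v $ i - of_int ((\<chi> i. round (v $ i)) $ i)\<bar>))"
    by (rule vz_le)
  also have "\<dots> \<le> 1/2"
  proof -
    have "\<And>a. \<bar>v$a - of_int (round (v$a))\<bar> \<le> 1/2" using of_int_round_abs_le by (simp add: abs_minus_commute)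
    then show ?thesis by (subst Max_le_iff) auto
  qed
  finally show ?thesis .
qed

lemma vz_ge0: "vzdist v \<ge> 0"
proof (rule vz_ge)
  fix m :: "int^'a"
  obtain i :: 'a where True by blast
  show "0 \<le> Max (range (\<lambda>i. \<bar>v $ i - of_int (m $ i)\<bar>))"
    using Max_ge_abs[of "\<lambda>i. v $ i - of_int (m $ i)" i] by linarith
qed

lemma box_close:
  fixes a b :: real and Q :: nat
  assumes "Q \<ge> 1" "0 \<le> a" "0 \<le> b"
    and "nat \<lfloor>real Q * a\<rfloor> = nat \<lfloor>real Q * b\<rfloor>"
  shows "\<bar>a - b\<bar> \<le> 1 / real Q"
proof -
  have "\<lfloor>real Q * a\<rfloor> = \<lfloor>real Q * b\<rfloor>"
    using assms by (simp add: eq_nat_nat_iff)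
  then have "\<bar>real Q * a - real Q * b\<bar> < 1"
    by linarith
  then have "real Q * \<bar>a - b\<bar> \<le> 1"
    by (simp add: abs_mult right_diff_distrib[symmetric])
  then show ?thesis using assms(1) by (simp add: field_simps)
qed

lemma dirichlet:
  fixes w :: "real ^ 'n" and Q :: nat
  assumes Q: "Q \<ge> 1"
  shows "\<exists>T::nat. 1 \<le> T \<and> T \<le> Q ^ CARD('n) \<and> vzdist (real T *\<^sub>R w) \<le> 1 / real Q"
proof -
  define f where "f t = (\<lambda>i::'n. nat \<lfloor>real Q * frac (real t * w $ i)\<rfloor>)" for t :: nat
  define B where "B = (\<Pi>\<^sub>E i\<in>(UNIV::'n set). {..<Q})"
  have cardB: "card B = Q ^ CARD('n)"
    unfolding B_def by (simp add: card_PiE)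
  have finB: "finite B" unfolding B_def by (simp add: finite_PiE)
  have sub: "f ` {0..Q ^ CARD('n)} \<subseteq> B"
  proof
    fix y assume "y \<in> f ` {0..Q ^ CARD('n)}"
    then obtain t where y: "y = f t" by auto
    have "nat \<lfloor>real Q * frac (real t * w $ i)\<rfloor> < Q" for i
    proof -
      have "real Q * frac (real t * w $ i) < real Q"
        using Q frac_lt_1[of "real t * w $ i"] by simp
      then have "\<lfloor>real Q * frac (real t * w $ i)\<rfloor> < int Q"
        by (simp add: floor_less_iff)
      then show ?thesis using Q by (metis nat_int zless_nat_conj of_nat_0_less_iff less_le_trans zero_less_one)
    qed
    then show "y \<in> B" unfolding B_def y f_def by auto
  qed
  have "\<not> inj_on f {0..Q ^ CARD('n)}"
  proof
    assume "inj_on f {0..Q ^ CARD('n)}"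
    then have "card {0..Q ^ CARD('n)} \<le> card B"
      using card_inj_on_le[OF _ sub finB] by blast
    then show False using cardB by simp
  qed
  then obtain t1 t2 where t: "t1 \<in> {0..Q ^ CARD('n)}" "t2 \<in> {0..Q ^ CARD('n)}" "t1 \<noteq> t2" "f t1 = f t2"
    unfolding inj_on_def by blast
  have main: "\<exists>T::nat. 1 \<le> T \<and> T \<le> Q ^ CARD('n) \<and> vzdist (real T *\<^sub>R w) \<le> 1 / real Q"
    if "t1 < t2" "t1 \<le> Q ^ CARD('n)" "t2 \<le> Q ^ CARD('n)" "f t1 = f t2" for t1 t2
  proof (intro exI conjI)
    show "1 \<le> t2 - t1" "t2 - t1 \<le> Q ^ CARD('n)" using that by auto
    define m where "m = (\<chi> i. \<lfloor>real t2 * w $ i\<rfloor> - \<lfloor>real t1 * w $ i\<rfloor>)"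
    have "vzdist (real (t2 - t1) *\<^sub>R w) \<le> Max (range (\<lambda>i. \<bar>(real (t2 - t1) *\<^sub>R w) $ i - of_int (m $ i)\<bar>))"
      by (rule vz_le)
    also have "\<dots> \<le> 1 / real Q"
    proof (subst Max_le_iff, simp_all, clarify)
      fix i
      have eq: "(real (t2 - t1) *\<^sub>R w) $ i - of_int (m $ i) = frac (real t2 * w $ i) - frac (real t1 * w $ i)"
        using that(1) by (simp add: m_def frac_def of_nat_diff algebra_simps)
      have "nat \<lfloor>real Q * frac (real t2 * w $ i)\<rfloor> = nat \<lfloor>real Q * frac (real t1 * w $ i)\<rfloor>"
        using that(4) unfolding f_def by (metis)
      then have "\<bar>frac (real t2 * w $ i) - frac (real t1 * w $ i)\<bar> \<le> 1 / real Q"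
        by (rule box_close[OF Q frac_ge_0 frac_ge_0])
      then show "\<bar>real (t2 - t1) * w $ i - real_of_int (m $ i)\<bar> \<le> 1 / real Q"
        using eq by simp
    qed
    finally show "vzdist (real (t2 - t1) *\<^sub>R w) \<le> 1 / real Q" .
  qed
  show ?thesis
  proof (cases "t1 < t2")
    case True then show ?thesis using main t by auto
  next
    case False then have "t2 < t1" using t(3) by simp
    then show ?thesis using main[of t2 t1] t by auto
  qed
qed

lemma vz_pos:
  fixes w :: "real ^ 'n"
  assumes nr: "non_resonant w" and T: "T \<ge> 1"
  shows "vzdist (real T *\<^sub>R w) > 0"
proof -
  obtain i :: 'n where True by blast
  define k where "k = (\<chi> l. if l = i then int T else 0)"
  have "k \<noteq> 0" using T by (auto simp: k_def vec_eq_iff intro!: exI[of _ i])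
  then have nz: "ipair k w \<notin> \<int>" using nr unfolding non_resonant_def by blast
  have ip: "ipair k w = real T * w $ i"
    proof -
    have "ipair k w = (\<Sum>l\<in>UNIV. if l = i then real T * w $ i else 0)"
      unfolding ipair_def k_def by (rule sum.cong) auto
    then show ?thesis by simp
  qed
  define x where "x = real T * w $ i"
  have pos: "\<bar>x - of_int (round x)\<bar> > 0"
    using nz ip unfolding x_def by (metis Ints_of_int zero_less_abs_iff eq_iff_diff_eq_0)
  have "\<bar>x - of_int (round x)\<bar> \<le> vzdist (real T *\<^sub>R w)"
  proof (rule vz_ge)
    fix m :: "int^'n"
    have "\<bar>x - of_int (round x)\<bar> \<le> \<bar>(real T *\<^sub>R w) $ i - of_int (m $ i)\<bar>"
      unfolding x_def using round_best by simp
    also have "\<dots> \<le> Max (range (\<lambda>i. \<bar>(real T *\<^sub>R w) $ i - of_int (m $ i)\<bar>))"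
      by (rule Max_ge_abs)
    finally show "\<bar>x - of_int (round x)\<bar> \<le> Max (range (\<lambda>i. \<bar>(real T *\<^sub>R w) $ i - of_int (m $ i)\<bar>))" .
  qed
  then show ?thesis using pos by linarith
qed

lemma exists_better:
  fixes w :: "real ^ 'n"
  assumes "d > 0"
  shows "\<exists>T::nat. 1 \<le> T \<and> vzdist (real T *\<^sub>R w) < d"
proof -
  define Q where "Q = nat \<lceil>1 / d\<rceil> + 1"
  have Q1: "Q \<ge> 1" by (simp add: Q_def)
  have "real Q > 1 / d" unfolding Q_def by linarith
  then have lt: "1 / real Q < d" using assms Q1
    by (simp add: divide_less_eq field_simps)
  obtain T where "1 \<le> T" "vzdist (real T *\<^sub>R w) \<le> 1 / real Q"
    using dirichlet[OF Q1, of w] by blast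
  then show ?thesis using lt by (intro exI[of _ T]) auto
qed

lemma periods_props:
  fixes w :: "real ^ 'n"
  assumes nr: "non_resonant w"
  shows "periods w j \<ge> 1 \<and> periods w (Suc j) \<ge> 1 \<and>
         vzdist (real (periods w (Suc j)) *\<^sub>R w) < vzdist (real (periods w j) *\<^sub>R w)"
proof (induction j)
  case 0
  have ex: "\<exists>T::nat. 1 \<le> T \<and> vzdist (real T *\<^sub>R w) < vzdist (real (periods w 0) *\<^sub>R w)"
    by (rule exists_better[OF vz_pos[OF nr]]) simp
  show ?case using LeastI_ex[OF ex] by simp
next
  case (Suc j)
  have ex: "\<exists>T::nat. 1 \<le> T \<and> vzdist (real T *\<^sub>R w) < vzdist (real (periods w (Suc j)) *\<^sub>R w)"
    by (rule exists_better[OF vz_pos[OF nr]]) (use Suc in simp)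
  have "periods w (Suc (Suc j)) = (LEAST T::nat. 1 \<le> T \<and> vzdist (real T *\<^sub>R w) < vzdist (real (periods w (Suc j)) *\<^sub>R w))"
    by simp
  then show ?case using LeastI_ex[OF ex] Suc by simp
qed

lemma periods_unbounded:
  fixes w :: "real ^ 'n"
  assumes nr: "non_resonant w"
  shows "\<exists>j. B < periods w j"
proof (rule ccontr)
  assume "\<not> ?thesis"
  then have bd: "range (periods w) \<subseteq> {..B}" by (auto simp: not_less)
  define g where "g j = - vzdist (real (periods w j) *\<^sub>R w)" for j
  have "strict_mono g"
    by (rule strict_monoI_Suc) (use periods_props[OF nr] in \<open>auto simp: g_def\<close>)
  then have "inj g" by (rule strict_mono_imp_inj_on)
  then have "inj (periods w)" unfolding g_def inj_def by auto
  moreover have "finite (range (periods w))" using bd finite_subset by blast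
  ultimately have "finite (UNIV :: nat set)" using finite_imageD by blast
  then show False by simp
qed

lemma periods_dir:
  fixes w :: "real ^ 'n"
  assumes nr: "non_resonant w"
  shows "vzdist (real (periods w j) *\<^sub>R w) \<le> 2 * real (periods w (Suc j)) powr (- 1 / real CARD('n))"
proof -
  define A where "A = real (periods w (Suc j))"
  define n where "n = real CARD('n)"
  have A1: "A \<ge> 1" using periods_props[OF nr, of j] by (simp add: A_def)
  have n1: "n \<ge> 1" by (simp add: n_def)
  define r where "r = A powr (1 / n)"
  have r1: "r \<ge> 1" unfolding r_def using A1 n1 by (simp add: ge_one_powr_ge_zero)
  have rhs: "2 * A powr (- 1 / n) = 2 / r"
    unfolding r_def using powr_minus_divide[of A "1/n"] by simp
  have rn: "r ^ CARD('n) = A"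
  proof -
    have "r ^ CARD('n) = r powr real CARD('n)" using r1 by (simp add: powr_realpow)
    also have "\<dots> = A" unfolding r_def using A1 n1 by (simp add: powr_powr n_def)
    finally show ?thesis .
  qed
  show ?thesis
  proof (cases "r < 2")
    case True
    have "vzdist (real (periods w j) *\<^sub>R w) \<le> 1/2" by (rule vz_half)
    also have "1/2 \<le> 2 / r" using True r1 by (simp add: field_simps)
    finally show ?thesis using rhs by (simp add: A_def n_def)
  next
    case False
    define Q where "Q = nat \<lceil>r / 2\<rceil>"
    have Qge: "real Q \<ge> r / 2" unfolding Q_def by linarith
    have Qlt: "real Q < r" unfolding Q_def using False by linarith
    have Q1: "Q \<ge> 1" using Qge False by linarith
    obtain T where T: "1 \<le> T" "T \<le> Q ^ CARD('n)" "vzdist (real T *\<^sub>R w) \<le> 1 / real Q"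
      using dirichlet[OF Q1, of w] by blast
    have "real Q ^ CARD('n) < r ^ CARD('n)"
      by (rule power_strict_mono) (use Qlt in auto)
    then have "real T < A" using T(2) rn
      by (metis of_nat_le_iff of_nat_power order.strict_trans1)
    then have "T < periods w (Suc j)" unfolding A_def by simp
    then have "\<not> (1 \<le> T \<and> vzdist (real T *\<^sub>R w) < vzdist (real (periods w j) *\<^sub>R w))"
      unfolding periods.simps by (rule not_less_Least)
    then have "vzdist (real (periods w j) *\<^sub>R w) \<le> 1 / real Q" using T by linarith
    also have "\<dots> \<le> 2 / r" using Qge r1 Q1 by (simp add: field_simps)
    finally show ?thesis using rhs by (simp add: A_def n_def)
  qed
qed

lemma key:
  fixes k :: "int ^ 'n" and w :: "real ^ 'n" and T :: nat and m :: int
  assumes half: "real T * \<bar>ipair k w - of_int m\<bar> \<le> 1/2"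
  shows "real T * \<bar>ipair k w - of_int m\<bar> \<le> real CARD('n) * of_int (int_supnorm k) * vzdist (real T *\<^sub>R w)"
proof -
  define x where "x = ipair k w"
  define K where "K = real_of_int (int_supnorm k)"
  define n where "n = real CARD('n)"
  have Kge: "\<bar>real_of_int (k $ i)\<bar> \<le> K" for i
  proof -
    have "\<bar>k $ i\<bar> \<le> int_supnorm k" unfolding int_supnorm_def by (rule Max_ge) auto
    then show ?thesis unfolding K_def by linarith
  qed
  have "real T * \<bar>x - of_int m\<bar> \<le> n * K * vzdist (real T *\<^sub>R w)"
  proof -
    have "real T * \<bar>x - of_int m\<bar> \<le> n * K * Max (range (\<lambda>i. \<bar>(real T *\<^sub>R w) $ i - of_int (p $ i)\<bar>))"
      for p :: "int^'n"
    proof -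
      define d where "d = Max (range (\<lambda>i. \<bar>(real T *\<^sub>R w) $ i - of_int (p $ i)\<bar>))"
      define s where "s = (\<Sum>i\<in>UNIV. of_int (k $ i) * ((real T *\<^sub>R w) $ i - of_int (p $ i)))"
      have di: "\<bar>(real T *\<^sub>R w) $ i - of_int (p $ i)\<bar> \<le> d" for i
        unfolding d_def by (rule Max_ge_abs)
      have "\<bar>s\<bar> \<le> (\<Sum>i\<in>UNIV. \<bar>of_int (k $ i) * ((real T *\<^sub>R w) $ i - of_int (p $ i))\<bar>)"
        unfolding s_def by (rule sum_abs)
      also have "\<dots> \<le> (\<Sum>i\<in>(UNIV::'n set). K * d)"
      proof (rule sum_mono)
        fix i
        show "\<bar>of_int (k $ i) * ((real T *\<^sub>R w) $ i - of_int (p $ i))\<bar> \<le> K * d"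
          unfolding abs_mult using Kge[of i] di[of i]
          by (intro mult_mono) auto
      qed
      also have "\<dots> = n * K * d" by (simp add: n_def)
      finally have sb: "\<bar>s\<bar> \<le> n * K * d" .
      have s_eq: "s = real T * x - (\<Sum>i\<in>UNIV. of_int (k $ i * p $ i))"
        unfolding s_def x_def ipair_def
        by (simp add: algebra_simps sum_subtractf sum_distrib_left)
      define z where "z = int T * m - (\<Sum>i\<in>UNIV. k $ i * p $ i)"
      have z_eq: "of_int z = s - real T * (x - of_int m)"
        unfolding z_def s_eq by (simp add: algebra_simps)
      have hx: "real T * \<bar>x - of_int m\<bar> \<le> 1/2" using half by (simp add: x_def)
      have Tabs: "\<bar>real T * (x - of_int m)\<bar> = real T * \<bar>x - of_int m\<bar>" by (simp add: abs_mult)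
      show ?thesis
      proof (cases "z = 0")
        case True
        then have "s = real T * (x - of_int m)" using z_eq by simp
        then show ?thesis using sb Tabs by (simp add: d_def)
      next
        case False
        then have "1 \<le> \<bar>real_of_int z\<bar>" by linarith
        then have "1 \<le> \<bar>s\<bar> + real T * \<bar>x - of_int m\<bar>" using z_eq Tabs by linarith
        then show ?thesis using sb hx by (simp add: d_def)
      qed
    qed
    note P = this
    have K0: "K \<ge> 0" using Kge[of undefined] by linarith
    have n0: "n > 0" by (simp add: n_def)
    show ?thesis
    proof (cases "K = 0")
      case True
      then show ?thesis using P[of 0] by simp
    next
      case False
      then have nK: "n * K > 0" using K0 n0 by simp
      have "real T * \<bar>x - of_int m\<bar> / (n * K) \<le> vzdist (real T *\<^sub>R w)"
        by (rule vz_ge) (use P nK in \<open>simp add: divide_le_eq mult.commute\<close>)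
      then show ?thesis using nK by (simp add: divide_le_eq mult.commute)
    qed
  qed
  then show ?thesis by (simp add: x_def K_def n_def)
qed

lemma alg:
  fixes eps T A N C \<tau> n b :: real
  assumes eps: "eps > 0" and T1: "T \<ge> 1" and A1: "A \<ge> 1" and N: "N > 0" and C: "C > 0"
    and tau: "\<tau> \<ge> 0" and n: "n > 0"
    and h1: "T * eps \<le> N * (2 * A powr (-1/n))"
    and h2: "A \<le> C * T powr (1+\<tau>)"
    and h3: "1 < 2 * A * eps"
    and bdef: "b = 1/n + 1/(1+\<tau>)" and b1: "b > 1"
  shows "(2 powr (b+1) * C powr (1/(1+\<tau>)) * N) powr (-1/(b-1)) \<le> eps"
proof -
  define s where "s = 1/(1+\<tau>)"
  have s0: "s > 0" using tau by (simp add: s_def)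
  have "(A / C) powr s \<le> (T powr (1+\<tau>)) powr s"
    by (rule powr_mono2) (use s0 h2 C A1 in \<open>auto simp: divide_le_eq mult.commute\<close>)
  also have "\<dots> = T" using T1 tau by (simp add: powr_powr s_def)
  finally have hT: "A powr s / C powr s \<le> T" by (simp add: powr_divide)
  have "eps * (A powr s / C powr s) \<le> T * eps" using mult_left_mono[OF hT, of eps] eps by (simp add: mult.commute)
  also note h1
  finally have "eps * A powr s \<le> 2 * N * C powr s * A powr (-1/n)"
    using C by (simp add: field_simps)
  then have "eps \<le> 2 * N * C powr s * (A powr (-1/n) / A powr s)"
    using A1 by (simp add: field_simps)
  also have "A powr (-1/n) / A powr s = A powr (-b)"
    using A1 by (simp add: bdef s_def powr_diff[symmetric])
  also have "A powr (-b) \<le> (1 / (2 * eps)) powr (-b)"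
    by (rule powr_mono2') (use b1 eps h3 in \<open>auto simp: divide_le_eq mult.commute mult.left_commute\<close>)
  also have "(1 / (2 * eps)) powr (-b) = 2 powr b * eps powr b"
    using eps by (simp add: powr_minus_divide powr_divide powr_mult)
  finally have "eps \<le> 2 * N * C powr s * (2 powr b * eps powr b)"
    using N C by (simp add: mult_left_mono)
  then have "eps / eps powr b \<le> 2 powr (b+1) * C powr s * N"
    using eps by (simp add: divide_le_eq powr_add field_simps)
  then have le: "eps powr (1 - b) \<le> 2 powr (b+1) * C powr s * N"
    using eps by (simp add: powr_diff)
  have "(2 powr (b+1) * C powr s * N) powr (1/(1-b)) \<le> (eps powr (1 - b)) powr (1/(1-b))"
    by (rule powr_mono2') (use b1 eps le in auto)
  also have "\<dots> = eps" using b1 eps by (simp add: powr_powr)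
  finally have fin: "(2 powr (b+1) * C powr s * N) powr (1/(1-b)) \<le> eps" .
  have "1/(1-b) = -1/(b-1)" using b1 by (simp add: field_simps)
  then show ?thesis using fin by (simp add: s_def)
qed

theorem proposition3p10:
  fixes w :: "real ^ 'n" and \<tau> C :: real
  assumes "non_resonant w"
    and "\<tau> \<ge> 0"
    and "CARD('n) = 1 \<or> \<tau> < 1 / (real CARD('n) - 1)"
    and "C > 0"
    and "\<forall>i. real (periods w (Suc i)) \<le> C * real (periods w i) powr (1 + \<tau>)"
  shows "\<exists>D>0. \<forall>k::int ^ 'n. k \<noteq> 0 \<longrightarrow>
           zdist (ipair k w) \<ge> D * real_of_int (int_supnorm k) powr
             (- (1 + (real CARD('n) * \<tau>) / (real CARD('n) - (real CARD('n) - 1) * (1 + \<tau>)))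
              * real CARD('n))"
proof -
  note nr = assms(1) and tau = assms(2) and C = assms(4) and growth = assms(5)
  define n where "n = real CARD('n)"
  have n1: "n \<ge> 1" by (simp add: n_def)
  define den where "den = n - (n - 1) * (1 + \<tau>)"
  have den_eq: "den = 1 - (n - 1) * \<tau>" by (simp add: den_def algebra_simps)
  have den0: "den > 0"
  proof (cases "CARD('n) = 1")
    case True then show ?thesis by (simp add: den_eq n_def)
  next
    case False
    have "CARD('n) > 0" by simp
    then have "CARD('n) > 1" using False by linarith
    then have "\<tau> < 1 / (n - 1)" and "n > 1" using assms(3) False by (auto simp: n_def)
    then have "(n - 1) * \<tau> < 1" by (simp add: field_simps)
    then show ?thesis by (simp add: den_eq)
  qed
  define b where "b = 1/n + 1/(1+\<tau>)"
  have bm1: "b - 1 = den / (n * (1 + \<tau>))"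
  proof -
    have p: "n * (1 + \<tau>) > 0" using n1 tau by simp
    have "b - 1 = (1 + \<tau> + n - n * (1 + \<tau>)) / (n * (1 + \<tau>))"
    proof -
      have a: "n \<noteq> 0" "1 + \<tau> \<noteq> 0" "n + \<tau> * n \<noteq> 0" using n1 tau p by (auto simp: algebra_simps)
      show ?thesis unfolding b_def using a by (simp add: field_simps)
    qed
    then show ?thesis by (simp add: den_eq algebra_simps)
  qed
  have "den / (n * (1 + \<tau>)) > 0" using den0 n1 tau by simp
  then have b1: "b > 1" using bm1 by simp
  have expo: "- (1 + (n * \<tau>) / den) * n = -1 / (b - 1)"
    using den0 n1 tau unfolding bm1 by (simp add: den_eq field_simps)
  define M0 where "M0 = 2 powr (b+1) * C powr (1/(1+\<tau>)) * n"
  have M0: "M0 > 0" using C n1 by (simp add: M0_def)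
  define D where "D = M0 powr (-1/(b-1))"
  show ?thesis
  proof (intro exI[of _ D] conjI allI impI)
    show "D > 0" using M0 by (simp add: D_def)
    fix k :: "int ^ 'n" assume k0: "k \<noteq> 0"
    define K where "K = real_of_int (int_supnorm k)"
    obtain i where ki: "k $ i \<noteq> 0" using k0 by (auto simp: vec_eq_iff)
    have "\<bar>k $ i\<bar> \<le> int_supnorm k" unfolding int_supnorm_def by (rule Max_ge) auto
    then have K1: "K \<ge> 1" using ki unfolding K_def by linarith
    define x where "x = ipair k w"
    define m where "m = round x"
    define eps where "eps = zdist x"
    have eps_eq: "eps = \<bar>x - of_int m\<bar>" by (simp add: eps_def m_def zdist_round)
    have "x \<notin> \<int>" using nr k0 unfolding non_resonant_def x_def by blast
    then have eps0: "eps > 0" unfolding eps_eq by (metis Ints_of_int zero_less_abs_iff eq_iff_diff_eq_0)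
    have epsh: "eps \<le> 1/2" unfolding eps_eq m_def using of_int_round_abs_le[of x] by (simp add: abs_minus_commute)
    obtain j0 where j0: "nat \<lceil>1/(2*eps)\<rceil> < periods w j0" using periods_unbounded[OF nr] by blast
    have "1/2 < real (periods w j0) * eps"
    proof -
      have "1/(2*eps) < real (periods w j0)" using j0 by linarith
      then show ?thesis using eps0 by (simp add: field_simps)
    qed
    then have exJ: "\<exists>j. 1/2 < real (periods w j) * eps" by blast
    define J where "J = (LEAST j. 1/2 < real (periods w j) * eps)"
    have J: "1/2 < real (periods w J) * eps" unfolding J_def by (rule LeastI_ex[OF exJ])
    have "J \<noteq> 0"
    proof
      assume "J = 0" then show False using J epsh by simp
    qed
    then obtain j where Jj: "J = Suc j" by (cases J) auto
    have "\<not> (1/2 < real (periods w j) * eps)"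
      using not_less_Least[of j "\<lambda>j. 1/2 < real (periods w j) * eps"] Jj unfolding J_def by simp
    then have hj: "real (periods w j) * eps \<le> 1/2" by simp
    have kk: "real (periods w j) * eps \<le> n * K * vzdist (real (periods w j) *\<^sub>R w)"
      using key[of "periods w j" k w m] hj unfolding eps_eq x_def n_def K_def by simp
    have dd: "vzdist (real (periods w j) *\<^sub>R w) \<le> 2 * real (periods w (Suc j)) powr (- 1 / n)"
      using periods_dir[OF nr, of j] by (simp add: n_def)
    have h1: "real (periods w j) * eps \<le> (n * K) * (2 * real (periods w (Suc j)) powr (- 1 / n))"
    proof -
      have "0 \<le> n * K" using n1 K1 by simp
      then show ?thesis by (rule order_trans[OF kk mult_left_mono[OF dd]])
    qed
    have pp: "periods w j \<ge> 1 \<and> periods w (Suc j) \<ge> 1" using periods_props[OF nr, of j] by simp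
    have fin: "(2 powr (b+1) * C powr (1/(1+\<tau>)) * (n * K)) powr (-1/(b-1)) \<le> eps"
      by (rule alg[OF eps0 _ _ _ C tau _ h1 growth[rule_format] _ b_def b1])
         (use pp n1 K1 J Jj in \<open>auto simp: mult.commute mult.left_commute\<close>)
    have "(2 powr (b+1) * C powr (1/(1+\<tau>)) * (n * K)) powr (-1/(b-1)) = D * K powr (-1/(b-1))"
      unfolding D_def M0_def using K1 n1 C by (simp add: powr_mult[symmetric] mult.assoc)
    then show "D * real_of_int (int_supnorm k) powr
             (- (1 + (real CARD('n) * \<tau>) / (real CARD('n) - (real CARD('n) - 1) * (1 + \<tau>)))
              * real CARD('n)) \<le> zdist (ipair k w)"
      using fin expo unfolding K_def[symmetric] x_def[symmetric] eps_def[symmetric] n_def[symmetric] den_def[symmetric]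
      by simp
  qed
qed

end
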